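(* A U-matroid $U=(E,\mathcal{D},\rho)$ is a poset matroid if and only if every basis of $U$ is an element of $\mathcal{D}$.
   Context: An accessible distributive lattice on finite $E$ is a family $\mathcal{D}\subseteq2^E$ containing $\emptyset,E$, closed under $\cup,\cap$, such that each nonempty $A\in\mathcal{D}$ has some $x$ with $A\setminus\{x\}\in\mathcal{D}$. A U-matroid is a triple $(E,\mathcal{D},\rho)$ with $\rho:\mathcal{D}\to\mathbb{N}$ satisfying $\rho(\emptyset)=0$; $\rho(A)\le\rho(B)$ for $A\subseteq B$; $\rho(A)+\rho(B)\ge\rho(A\cup B)+\rho(A\cap B)$; and $\rho(A\cup\{e\})-\rho(A)\le1$ whenever $A,A\cup\{e\}\in\mathcal{D}$. Its bases are the supports of the vertices of the base polyhedron $\{\mathbf{x}\in\mathbb{R}^E:\sum_{a\in A}x_a\le\rho(A)\ \forall A\in\mathcal{D},\ \sum_{e\in E}x_e=\rho(E)\}$. A poset matroid is a triple $(E,\mathcal{D},\rho)$ with $\mathcal{D}$ an accessible distributive lattice and $\rho:\mathcal{D}\to\mathbb{N}$ satisfying $\rho(\emptyset)=0$, monotonicity, unit increase, and the local chain property: whenever $A\in\mathcal{D}$, $b_1,b_2\in E$, $A_{12}=A\cup\{b_1,b_2\}\in\mathcal{D}$ and $\rho(A_{12})>\rho(A)$, there is $j\in\{1,2\}$ with $A\cup\{b_j\}\in\mathcal{D}$ and $\rho(A\cup\{b_j\})=\rho(A)+1$. *)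

theory Defs
  imports Main "HOL.Real"
begin

definition acc_dist_lattice :: "'a set \<Rightarrow> 'a set set \<Rightarrow> bool" where
  "acc_dist_lattice E D \<longleftrightarrow>
     finite E \<and> D \<subseteq> Pow E \<and> {} \<in> D \<and> E \<in> D \<and>
     (\<forall>A\<in>D. \<forall>B\<in>D. A \<union> B \<in> D \<and> A \<inter> B \<in> D) \<and>
     (\<forall>A\<in>D. A \<noteq> {} \<longrightarrow> (\<exists>x\<in>A. A - {x} \<in> D))"

text \<open>U-matroid (E, D, rho); rho is only relevant on D.\<close>
definition u_matroid :: "'a set \<Rightarrow> 'a set set \<Rightarrow> ('a set \<Rightarrow> nat) \<Rightarrow> bool" where
  "u_matroid E D \<rho> \<longleftrightarrow>
     acc_dist_lattice E D \<and> \<rho> {} = 0 \<and>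
     (\<forall>A\<in>D. \<forall>B\<in>D. A \<subseteq> B \<longrightarrow> \<rho> A \<le> \<rho> B) \<and>
     (\<forall>A\<in>D. \<forall>B\<in>D. \<rho> A + \<rho> B \<ge> \<rho> (A \<union> B) + \<rho> (A \<inter> B)) \<and>
     (\<forall>A e. A \<in> D \<longrightarrow> insert e A \<in> D \<longrightarrow> \<rho> (insert e A) \<le> \<rho> A + 1)"

definition poset_matroid :: "'a set \<Rightarrow> 'a set set \<Rightarrow> ('a set \<Rightarrow> nat) \<Rightarrow> bool" where
  "poset_matroid E D \<rho> \<longleftrightarrow>
     acc_dist_lattice E D \<and> \<rho> {} = 0 \<and>
     (\<forall>A\<in>D. \<forall>B\<in>D. A \<subseteq> B \<longrightarrow> \<rho> A \<le> \<rho> B) \<and>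
     (\<forall>A e. A \<in> D \<longrightarrow> insert e A \<in> D \<longrightarrow> \<rho> (insert e A) \<le> \<rho> A + 1) \<and>
     (\<forall>A b1 b2. A \<in> D \<longrightarrow> b1 \<in> E \<longrightarrow> b2 \<in> E \<longrightarrow>
        A \<union> {b1, b2} \<in> D \<longrightarrow> \<rho> (A \<union> {b1, b2}) > \<rho> A \<longrightarrow>
        (\<exists>j\<in>{b1, b2}. insert j A \<in> D \<and> \<rho> (insert j A) = \<rho> A + 1))"

text \<open>Vectors in R^E are modelled as functions 'a => real vanishing outside E.
  The base polyhedron of (E, D, rho).\<close>
definition base_polyhedron :: "'a set \<Rightarrow> 'a set set \<Rightarrow> ('a set \<Rightarrow> nat) \<Rightarrow> ('a \<Rightarrow> real) set" where
  "base_polyhedron E D \<rho> =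
     {x. (\<forall>e. e \<notin> E \<longrightarrow> x e = 0) \<and>
         (\<forall>A\<in>D. (\<Sum>a\<in>A. x a) \<le> real (\<rho> A)) \<and>
         (\<Sum>e\<in>E. x e) = real (\<rho> E)}"

definition is_vertex :: "('a \<Rightarrow> real) set \<Rightarrow> ('a \<Rightarrow> real) \<Rightarrow> bool" where
  "is_vertex P x \<longleftrightarrow> x \<in> P \<and>
     (\<forall>y\<in>P. \<forall>z\<in>P. \<forall>t::real. 0 < t \<and> t < 1 \<and> x = (\<lambda>e. t * y e + (1 - t) * z e)
        \<longrightarrow> y = z)"

definition supp :: "'a set \<Rightarrow> ('a \<Rightarrow> real) \<Rightarrow> 'a set" where
  "supp E x = {e\<in>E. x e \<noteq> 0}"

definition is_basis :: "'a set \<Rightarrow> 'a set set \<Rightarrow> ('a set \<Rightarrow> nat) \<Rightarrow> 'a set \<Rightarrow> bool" where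
  "is_basis E D \<rho> B \<longleftrightarrow> (\<exists>x. is_vertex (base_polyhedron E D \<rho>) x \<and> B = supp E x)"

end

theory Submission
  imports Defs
begin


fun gv :: "('a set \<Rightarrow> nat) \<Rightarrow> 'a list \<Rightarrow> 'a \<Rightarrow> real" where
  "gv \<rho> [] = (\<lambda>_. 0)"
| "gv \<rho> (r # rs) = (gv \<rho> rs)(r := real (\<rho> (insert r (set rs))) - real (\<rho> (set rs)))"

definition chainF :: "'a set set \<Rightarrow> 'a set \<Rightarrow> 'a list \<Rightarrow> bool" where
  "chainF F A ls \<longleftrightarrow> distinct ls \<and> A \<inter> set ls = {} \<and> (\<forall>k. A \<union> set (drop k ls) \<in> F)"

lemma gv_out: "e \<notin> set rs \<Longrightarrow> gv \<rho> rs e = 0"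
  by (induction rs) auto

lemma gv_app: "e \<notin> set l1 \<Longrightarrow> gv \<rho> (l1 @ l2) e = gv \<rho> l2 e"
  by (induction l1) auto

lemma gv_sum: "distinct rs \<Longrightarrow> sum (gv \<rho> rs) (set rs) = real (\<rho> (set rs)) - real (\<rho> {})"
proof (induction rs)
  case Nil
  then show ?case by simp
next
  case (Cons r rs)
  have "sum (gv \<rho> (r # rs)) (set rs) = sum (gv \<rho> rs) (set rs)"
    using Cons.prems by (intro sum.cong) auto
  then show ?case using Cons by (simp add: sum.insert)
qed

lemma gv_sum_drop: "distinct rs \<Longrightarrow> sum (gv \<rho> rs) (set (drop k rs)) = real (\<rho> (set (drop k rs))) - real (\<rho> {})"
proof -
  assume d: "distinct rs"
  have "sum (gv \<rho> rs) (set (drop k rs)) = sum (gv \<rho> (drop k rs)) (set (drop k rs))"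
  proof (intro sum.cong refl)
    fix e assume e: "e \<in> set (drop k rs)"
    have "e \<notin> set (take k rs)" using d e
      by (metis append_take_drop_id disjoint_iff distinct_append)
    then show "gv \<rho> rs e = gv \<rho> (drop k rs) e"
      by (metis append_take_drop_id gv_app)
  qed
  also have "\<dots> = real (\<rho> (set (drop k rs))) - real (\<rho> {})"
    using d by (intro gv_sum) simp
  finally show ?thesis .
qed

lemma gv_determined:
  "distinct rs \<Longrightarrow> (\<forall>k. sum y (set (drop k rs)) = real (\<rho> (set (drop k rs))) - real (\<rho> {}))
   \<Longrightarrow> \<forall>e\<in>set rs. y e = gv \<rho> rs e"
proof (induction rs)
  case Nil
  then show ?case by simp
next
  case (Cons r rs)
  have h0: "sum y (insert r (set rs)) = real (\<rho> (insert r (set rs))) - real (\<rho> {})"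
    using Cons.prems(2)[rule_format, of 0] by simp
  have h1: "sum y (set rs) = real (\<rho> (set rs)) - real (\<rho> {})"
    using Cons.prems(2)[rule_format, of 1] by simp
  have yr: "y r = real (\<rho> (insert r (set rs))) - real (\<rho> (set rs))"
    using h0 h1 Cons.prems(1) by (simp add: sum.insert)
  have IH: "\<forall>e\<in>set rs. y e = gv \<rho> rs e"
    using Cons.prems by (intro Cons.IH) (auto dest: spec[of _ "Suc _"])
  show ?case using IH yr Cons.prems(1) by auto
qed

lemma chain_append:
  "chainF F A l2 \<Longrightarrow> chainF F (A \<union> set l2) l1 \<Longrightarrow> chainF F A (l1 @ l2)"
  unfolding chainF_def
proof (intro conjI allI)
  assume a: "distinct l2 \<and> A \<inter> set l2 = {} \<and> (\<forall>k. A \<union> set (drop k l2) \<in> F)"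
     and b: "distinct l1 \<and> (A \<union> set l2) \<inter> set l1 = {} \<and> (\<forall>k. A \<union> set l2 \<union> set (drop k l1) \<in> F)"
  show "distinct (l1 @ l2)" using a b by auto
  show "A \<inter> set (l1 @ l2) = {}" using a b by auto
  fix k
  show "A \<union> set (drop k (l1 @ l2)) \<in> F"
  proof (cases "k \<le> length l1")
    case True
    then have "A \<union> set (drop k (l1 @ l2)) = A \<union> set l2 \<union> set (drop k l1)" by auto
    then show ?thesis using b by simp
  next
    case False
    then have "A \<union> set (drop k (l1 @ l2)) = A \<union> set (drop (k - length l1) l2)" by auto
    then show ?thesis using a by simp
  qed
qed

lemma chain_exists:
  assumes "finite C" "A \<subseteq> C" "A \<in> F" "C \<in> F"
    and step: "\<And>A'. A' \<in> F \<Longrightarrow> A' \<subset> C \<Longrightarrow> \<exists>x\<in>C - A'. insert x A' \<in> F"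
  shows "\<exists>ls. chainF F A ls \<and> A \<union> set ls = C"
  using assms(2,3)
proof (induction "card (C - A)" arbitrary: A rule: less_induct)
  case less
  show ?case
  proof (cases "A = C")
    case True
    then show ?thesis using less.prems by (intro exI[of _ "[]"]) (auto simp: chainF_def)
  next
    case False
    then have "A \<subset> C" using less.prems by auto
    then obtain x where x: "x \<in> C - A" "insert x A \<in> F" using step less.prems by blast
    have "card (C - insert x A) < card (C - A)"
      using x assms(1) by (metis Diff_insert card_Diff1_less finite_Diff)
    then obtain ls where ls: "chainF F (insert x A) ls" "insert x A \<union> set ls = C"
      using less.hyps[of "insert x A"] x less.prems by auto
    have c1: "chainF F A [x]"
      unfolding chainF_def using x less.prems
      by (auto simp: drop_Cons' split: if_splits)
    have "chainF F A (ls @ [x])"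
      using chain_append[OF c1] ls by simp
    then show ?thesis using ls by (intro exI[of _ "ls @ [x]"]) auto
  qed
qed



lemma step_D:
  assumes L: "acc_dist_lattice E D" and A: "A \<in> D" and C: "C \<in> D" and AC: "A \<subset> C"
  shows "\<exists>x\<in>C - A. insert x A \<in> D"
proof -
  have P: "C \<in> D \<and> C \<subseteq> C \<and> \<not> C \<subseteq> A" using C AC by auto
  obtain S where S: "S \<in> D \<and> S \<subseteq> C \<and> \<not> S \<subseteq> A"
    and min: "\<forall>S'. S' \<in> D \<and> S' \<subseteq> C \<and> \<not> S' \<subseteq> A \<longrightarrow> card S \<le> card S'"
    using ex_has_least_nat[of "\<lambda>S. S \<in> D \<and> S \<subseteq> C \<and> \<not> S \<subseteq> A" C card, OF P] by blast
  have fin: "finite E" "D \<subseteq> Pow E" using L unfolding acc_dist_lattice_def by auto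
  have finS: "finite S" using S fin by (meson PowD finite_subset subsetD)
  have "S \<noteq> {}" using S by auto
  then obtain x where x: "x \<in> S" "S - {x} \<in> D" using L S unfolding acc_dist_lattice_def by blast
  have "card (S - {x}) < card S" using x finS by (meson card_Diff1_less)
  then have "\<not> (S - {x} \<in> D \<and> S - {x} \<subseteq> C \<and> \<not> S - {x} \<subseteq> A)"
    using min not_le by blast
  then have "S - {x} \<subseteq> A" using x S by blast
  then have xA: "x \<notin> A" and eq: "A \<union> S = insert x A" using S x by auto
  have "A \<union> S \<in> D" using L A S unfolding acc_dist_lattice_def by blast
  then show ?thesis using eq xA x S by auto
qed

lemma um_facts:
  assumes "u_matroid E D \<rho>"
  shows "acc_dist_lattice E D" "\<rho> {} = 0" "finite E" "D \<subseteq> Pow E" "{} \<in> D" "E \<in> D"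
    "\<And>A B. A \<in> D \<Longrightarrow> B \<in> D \<Longrightarrow> A \<union> B \<in> D"
    "\<And>A B. A \<in> D \<Longrightarrow> B \<in> D \<Longrightarrow> A \<inter> B \<in> D"
    "\<And>A B. A \<in> D \<Longrightarrow> B \<in> D \<Longrightarrow> A \<subseteq> B \<Longrightarrow> \<rho> A \<le> \<rho> B"
    "\<And>A B. A \<in> D \<Longrightarrow> B \<in> D \<Longrightarrow> \<rho> (A \<union> B) + \<rho> (A \<inter> B) \<le> \<rho> A + \<rho> B"
    "\<And>A e. A \<in> D \<Longrightarrow> insert e A \<in> D \<Longrightarrow> \<rho> (insert e A) \<le> \<rho> A + 1"
  using assms unfolding u_matroid_def acc_dist_lattice_def
  by (simp_all add: le_supI1)


lemma gv_feasible:
  assumes U: "u_matroid E D \<rho>" and d: "distinct rs" and ch: "\<forall>k. set (drop k rs) \<in> D"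
    and SD: "S \<in> D"
  shows "sum (gv \<rho> rs) (S \<inter> set rs) \<le> real (\<rho> (S \<inter> set rs))"
  using d ch
proof (induction rs)
  case Nil
  then show ?case using um_facts(2)[OF U] by simp
next
  case (Cons r rs)
  let ?R = "set rs"
  have chR: "\<forall>k. set (drop k rs) \<in> D" using Cons.prems(2) by (metis drop_Suc_Cons)
  have dR: "distinct rs" using Cons.prems(1) by simp
  have IH: "sum (gv \<rho> rs) (S \<inter> ?R) \<le> real (\<rho> (S \<inter> ?R))"
    using Cons.IH[OF dR chR] .
  have rR: "r \<notin> ?R" using Cons.prems by simp
  have RD: "?R \<in> D" using chR[rule_format, of 0] by simp
  have iRD: "insert r ?R \<in> D" using Cons.prems(2)[rule_format, of 0] by simp
  have eqs: "sum (gv \<rho> (r # rs)) (S \<inter> ?R) = sum (gv \<rho> rs) (S \<inter> ?R)"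
    using rR by (intro sum.cong) auto
  have finR: "finite (S \<inter> ?R)" by simp
  show ?case
  proof (cases "r \<in> S")
    case False
    then have "S \<inter> set (r # rs) = S \<inter> ?R" by auto
    then show ?thesis using eqs IH by simp
  next
    case True
    let ?P = "insert r (S \<inter> ?R)"
    have PE: "S \<inter> insert r ?R = ?P" using True by auto
    have PD: "?P \<in> D" using um_facts(8)[OF U SD iRD] unfolding PE .
    have sub: "\<rho> (?P \<union> ?R) + \<rho> (?P \<inter> ?R) \<le> \<rho> ?P + \<rho> ?R"
      using um_facts(10)[OF U PD RD] .
    have e1: "?P \<union> ?R = insert r ?R" by auto
    have e2: "?P \<inter> ?R = S \<inter> ?R" using rR by auto
    have sub2: "real (\<rho> (insert r ?R)) + real (\<rho> (S \<inter> ?R)) \<le> real (\<rho> ?P) + real (\<rho> ?R)"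
      using sub unfolding e1 e2 by linarith
    have "sum (gv \<rho> (r # rs)) ?P = gv \<rho> (r # rs) r + sum (gv \<rho> (r # rs)) (S \<inter> ?R)"
      using rR finR by (simp add: sum.insert)
    also have "\<dots> = real (\<rho> (insert r ?R)) - real (\<rho> ?R) + sum (gv \<rho> rs) (S \<inter> ?R)"
      using eqs by simp
    also have "\<dots> \<le> real (\<rho> ?P)" using IH sub2 by linarith
    finally show ?thesis using PE by simp
  qed
qed


lemma convex_eq:
  fixes a b R t :: real
  assumes "a \<le> R" "b \<le> R" "0 < t" "t < 1" "t * a + (1 - t) * b = R"
  shows "a = R \<and> b = R"
proof -
  have "t * a \<le> t * R" using assms by simp
  moreover have "(1 - t) * b \<le> (1 - t) * R" using assms by simp
  moreover have "t * R + (1 - t) * R = R" by (simp add: algebra_simps)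
  ultimately have "t * a = t * R" "(1 - t) * b = (1 - t) * R" using assms(5) by linarith+
  then show ?thesis using assms(3,4) by simp
qed

lemma gv_inP:
  assumes U: "u_matroid E D \<rho>" and d: "distinct rs" and ch: "\<forall>k. set (drop k rs) \<in> D"
    and sE: "set rs = E"
  shows "gv \<rho> rs \<in> base_polyhedron E D \<rho>"
proof -
  have r0: "\<rho> {} = 0" using um_facts(2)[OF U] .
  have DP: "D \<subseteq> Pow E" using um_facts(4)[OF U] .
  have 1: "\<forall>e. e \<notin> E \<longrightarrow> gv \<rho> rs e = 0" using sE gv_out by metis
  have 2: "\<forall>A\<in>D. sum (gv \<rho> rs) A \<le> real (\<rho> A)"
  proof
    fix A assume A: "A \<in> D"
    then have "A \<inter> set rs = A" using DP sE by auto
    then show "sum (gv \<rho> rs) A \<le> real (\<rho> A)" using gv_feasible[OF U d ch A] by simp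
  qed
  have 3: "sum (gv \<rho> rs) E = real (\<rho> E)" using gv_sum[OF d, of \<rho>] sE r0 by simp
  show ?thesis unfolding base_polyhedron_def using 1 2 3 by blast
qed

lemma gv_vertex:
  assumes U: "u_matroid E D \<rho>" and d: "distinct rs" and ch: "\<forall>k. set (drop k rs) \<in> D"
    and sE: "set rs = E"
  shows "is_vertex (base_polyhedron E D \<rho>) (gv \<rho> rs)"
proof -
  have r0: "\<rho> {} = 0" using um_facts(2)[OF U] .
  have inP: "gv \<rho> rs \<in> base_polyhedron E D \<rho>" using gv_inP[OF U d ch sE] .
  have main: "y = z" if y: "y \<in> base_polyhedron E D \<rho>" and z: "z \<in> base_polyhedron E D \<rho>"
      and t0: "0 < t" and t1: "t < 1" and tt: "gv \<rho> rs = (\<lambda>e. t * y e + (1 - t) * z e)" for y z t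
  proof -
    have both: "sum y (set (drop k rs)) = real (\<rho> (set (drop k rs))) - real (\<rho> {}) \<and>
                sum z (set (drop k rs)) = real (\<rho> (set (drop k rs))) - real (\<rho> {})" for k
    proof -
      let ?S = "set (drop k rs)"
      have SD: "?S \<in> D" using ch by blast
      have ys: "sum y ?S \<le> real (\<rho> ?S)" using y SD unfolding base_polyhedron_def by blast
      have zs: "sum z ?S \<le> real (\<rho> ?S)" using z SD unfolding base_polyhedron_def by blast
      have g: "sum (gv \<rho> rs) ?S = real (\<rho> ?S)" using gv_sum_drop[OF d] r0 by simp
      have "sum (gv \<rho> rs) ?S = t * sum y ?S + (1 - t) * sum z ?S"
        unfolding tt by (simp add: sum.distrib sum_distrib_left)
      then have "t * sum y ?S + (1 - t) * sum z ?S = real (\<rho> ?S)" using g by simp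
      then have "sum y ?S = real (\<rho> ?S) \<and> sum z ?S = real (\<rho> ?S)"
        using convex_eq[OF ys zs t0 t1] by blast
      then show ?thesis using r0 by simp
    qed
    have ey: "\<forall>e\<in>set rs. y e = gv \<rho> rs e"
      by (rule gv_determined[OF d]) (use both in blast)
    have ez: "\<forall>e\<in>set rs. z e = gv \<rho> rs e"
      by (rule gv_determined[OF d]) (use both in blast)
    show "y = z"
    proof
      fix e show "y e = z e"
      proof (cases "e \<in> E")
        case True then show ?thesis using ey ez sE by auto
      next
        case False then show ?thesis using y z unfolding base_polyhedron_def by auto
      qed
    qed
  qed
  show ?thesis unfolding is_vertex_def using inP main by blast
qed



lemma tight_closed:
  assumes U: "u_matroid E D \<rho>" and xP: "x \<in> base_polyhedron E D \<rho>"
    and T_def: "T = {S \<in> D. sum x S = real (\<rho> S)}"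
    and S: "S \<in> T" and V: "V \<in> T"
  shows "S \<union> V \<in> T \<and> S \<inter> V \<in> T"
proof -
  have SD: "S \<in> D" and VD: "V \<in> D" using S V T_def by auto
  have fin: "finite S" "finite V" using SD VD um_facts(3,4)[OF U] by (auto intro: finite_subset)
  have uD: "S \<union> V \<in> D" and iD: "S \<inter> V \<in> D" using um_facts(7,8)[OF U SD VD] by auto
  have le1: "sum x (S \<union> V) \<le> real (\<rho> (S \<union> V))" using xP uD unfolding base_polyhedron_def by blast
  have le2: "sum x (S \<inter> V) \<le> real (\<rho> (S \<inter> V))" using xP iD unfolding base_polyhedron_def by blast
  have sm: "real (\<rho> (S \<union> V)) + real (\<rho> (S \<inter> V)) \<le> real (\<rho> S) + real (\<rho> V)"
    using um_facts(10)[OF U SD VD] by linarith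
  have eq: "sum x (S \<union> V) + sum x (S \<inter> V) = sum x S + sum x V"
    using sum.union_inter[OF fin] .
  have "sum x S = real (\<rho> S)" "sum x V = real (\<rho> V)" using S V T_def by auto
  then have "sum x (S \<union> V) = real (\<rho> (S \<union> V))" "sum x (S \<inter> V) = real (\<rho> (S \<inter> V))"
    using le1 le2 sm eq by linarith+
  then show ?thesis using uD iD T_def by auto
qed

lemma sum_d:
  fixes e f :: 'a
  assumes "finite V"
  shows "sum (\<lambda>g. (if g = e then 1 else 0) - (if g = f then 1 else (0::real))) V
         = (if e \<in> V then 1 else 0) - (if f \<in> V then 1 else 0)"
  using assms by (simp add: sum_subtractf sum.delta)

lemma tight_step:
  assumes U: "u_matroid E D \<rho>" and vx: "is_vertex (base_polyhedron E D \<rho>) x"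
    and T_def: "T = {S \<in> D. sum x S = real (\<rho> S)}"
    and A: "A \<in> T" and C: "C \<in> T" and AC: "A \<subset> C"
  shows "\<exists>e\<in>C - A. insert e A \<in> T"
proof -
  have xP: "x \<in> base_polyhedron E D \<rho>" using vx unfolding is_vertex_def by blast
  have finE: "finite E" and DP: "D \<subseteq> Pow E" using um_facts(3,4)[OF U] by auto
  have TD: "T \<subseteq> D" using T_def by auto
  have finT: "\<And>V. V \<in> T \<Longrightarrow> finite V \<and> V \<subseteq> E" using TD DP finE by (auto intro: finite_subset)
  have P: "C \<in> T \<and> A \<subset> C \<and> C \<subseteq> C" using C AC by auto
  obtain S where S: "S \<in> T \<and> A \<subset> S \<and> S \<subseteq> C"
    and min: "\<forall>S'. S' \<in> T \<and> A \<subset> S' \<and> S' \<subseteq> C \<longrightarrow> card S \<le> card S'"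
    using ex_has_least_nat[of "\<lambda>S. S \<in> T \<and> A \<subset> S \<and> S \<subseteq> C" C card, OF P] by blast
  have key: "S - A \<subseteq> V" if V: "V \<in> T" and e: "e \<in> S - A" "e \<in> V" for V e
  proof -
    have "V \<inter> S \<in> T" using tight_closed[OF U xP T_def V] S by blast
    then have W: "(V \<inter> S) \<union> A \<in> T" using tight_closed[OF U xP T_def _ A] by blast
    have "A \<subset> (V \<inter> S) \<union> A" using e by auto
    moreover have sub: "(V \<inter> S) \<union> A \<subseteq> S" using S by auto
    ultimately have "card S \<le> card ((V \<inter> S) \<union> A)" using min W S by blast
    moreover have "finite S" using finT S by blast
    ultimately have "(V \<inter> S) \<union> A = S" using sub by (meson card_seteq)
    then show ?thesis by auto
  qed
  obtain e where e: "e \<in> S - A" using S by auto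
  show ?thesis
  proof (cases "S = insert e A")
    case True
    then show ?thesis using e S by auto
  next
    case False
    then obtain f where f: "f \<in> S - A" "f \<noteq> e" using e S by auto
    have eE: "e \<in> E" and fE: "f \<in> E" using e f S finT by auto
    have same: "(e \<in> V) = (f \<in> V)" if "V \<in> T" for V
      using key[OF that] e f by blast
    define d where "d = (\<lambda>g. (if g = e then 1 else 0) - (if g = f then 1 else (0::real)))"
    define Sl where "Sl = (\<lambda>V. real (\<rho> V) - sum x V) ` {V \<in> D. sum x V < real (\<rho> V)}"
    have finD: "finite D" using DP finE by (meson finite_Pow_iff finite_subset)
    have finSl: "finite (insert 1 Sl)" unfolding Sl_def using finD by simp
    define \<epsilon> where "\<epsilon> = Min (insert 1 Sl)"
    have eps_pos: "0 < \<epsilon>" unfolding \<epsilon>_def using finSl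
      by (subst Min_gr_iff) (auto simp: Sl_def)
    have eps_le: "\<epsilon> \<le> real (\<rho> V) - sum x V" if "V \<in> D" "sum x V < real (\<rho> V)" for V
      unfolding \<epsilon>_def using finSl that by (intro Min_le) (auto simp: Sl_def)
    have sd: "sum d V = (if e \<in> V then 1 else 0) - (if f \<in> V then 1 else 0)" if "finite V" for V
      unfolding d_def using sum_d[OF that] .
    have pert: "(\<lambda>g. x g + s * d g) \<in> base_polyhedron E D \<rho>" if s: "\<bar>s\<bar> = \<epsilon>" for s
    proof -
      have 1: "\<forall>g. g \<notin> E \<longrightarrow> x g + s * d g = 0"
        using xP eE fE unfolding base_polyhedron_def d_def by auto
      have sumeq: "sum (\<lambda>g. x g + s * d g) V = sum x V + s * sum d V" for V
        by (simp add: sum.distrib sum_distrib_left)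
      have 2: "\<forall>V\<in>D. sum (\<lambda>g. x g + s * d g) V \<le> real (\<rho> V)"
      proof
        fix V assume VD: "V \<in> D"
        have finV: "finite V" using VD DP finE by (auto intro: finite_subset)
        have le: "sum x V \<le> real (\<rho> V)" using xP VD unfolding base_polyhedron_def by blast
        show "sum (\<lambda>g. x g + s * d g) V \<le> real (\<rho> V)"
        proof (cases "V \<in> T")
          case True
          then have "sum d V = 0" using sd[OF finV] same[OF True] by simp
          then show ?thesis using le sumeq by simp
        next
          case False
          then have lt: "sum x V < real (\<rho> V)" using le VD T_def by auto
          have "\<bar>sum d V\<bar> \<le> 1" using sd[OF finV] by auto
          then have "\<bar>s * sum d V\<bar> \<le> \<epsilon>" using s
            by (metis abs_ge_zero abs_mult mult.right_neutral mult_left_mono)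
          then show ?thesis using eps_le[OF VD lt] sumeq by (smt (verit))
        qed
      qed
      have 3: "sum (\<lambda>g. x g + s * d g) E = real (\<rho> E)"
        using sumeq[of E] sd[OF finE] eE fE xP unfolding base_polyhedron_def by simp
      show ?thesis unfolding base_polyhedron_def using 1 2 3 by blast
    qed
    have yP: "(\<lambda>g. x g + \<epsilon> * d g) \<in> base_polyhedron E D \<rho>" using pert eps_pos by simp
    have zP: "(\<lambda>g. x g + (- \<epsilon>) * d g) \<in> base_polyhedron E D \<rho>" using pert[of "- \<epsilon>"] eps_pos by simp
    have xeq: "x = (\<lambda>g. (1/2) * (x g + \<epsilon> * d g) + (1 - 1/2) * (x g + (- \<epsilon>) * d g))"
      by (auto simp: algebra_simps)
    have "(\<lambda>g. x g + \<epsilon> * d g) = (\<lambda>g. x g + (- \<epsilon>) * d g)"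
    proof -
      have vv: "\<forall>y\<in>base_polyhedron E D \<rho>. \<forall>z\<in>base_polyhedron E D \<rho>. \<forall>t::real. 0 < t \<and> t < 1 \<and> x = (\<lambda>e. t * y e + (1 - t) * z e) \<longrightarrow> y = z"
        using vx unfolding is_vertex_def by blast
      have c: "(0::real) < 1/2 \<and> (1/2::real) < 1 \<and> x = (\<lambda>g. (1/2) * (x g + \<epsilon> * d g) + (1 - 1/2) * (x g + (- \<epsilon>) * d g))"
        using xeq by simp
      show ?thesis by (rule vv[rule_format, OF yP zP c])
    qed
    then have "x e + \<epsilon> * d e = x e + (- \<epsilon>) * d e" by metis
    then show ?thesis using eps_pos f by (simp add: d_def)
  qed
qed



lemma pm_facts:
  assumes "poset_matroid E D \<rho>"
  shows "acc_dist_lattice E D" "finite E" "D \<subseteq> Pow E" "{} \<in> D"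
    "\<And>A B. A \<in> D \<Longrightarrow> B \<in> D \<Longrightarrow> A \<subseteq> B \<Longrightarrow> \<rho> A \<le> \<rho> B"
    "\<And>A e. A \<in> D \<Longrightarrow> insert e A \<in> D \<Longrightarrow> \<rho> (insert e A) \<le> \<rho> A + 1"
    "\<And>A b1 b2. A \<in> D \<Longrightarrow> b1 \<in> E \<Longrightarrow> b2 \<in> E \<Longrightarrow> A \<union> {b1, b2} \<in> D \<Longrightarrow> \<rho> (A \<union> {b1, b2}) > \<rho> A \<Longrightarrow>
        (\<exists>j\<in>{b1, b2}. insert j A \<in> D \<and> \<rho> (insert j A) = \<rho> A + 1)"
proof -
  have a: "acc_dist_lattice E D" using assms unfolding poset_matroid_def by (elim conjE) assumption
  have m: "\<forall>A\<in>D. \<forall>B\<in>D. A \<subseteq> B \<longrightarrow> \<rho> A \<le> \<rho> B" using assms unfolding poset_matroid_def by (elim conjE) assumption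
  have u: "\<forall>A e. A \<in> D \<longrightarrow> insert e A \<in> D \<longrightarrow> \<rho> (insert e A) \<le> \<rho> A + 1" using assms unfolding poset_matroid_def by (elim conjE) assumption
  have l: "\<forall>A b1 b2. A \<in> D \<longrightarrow> b1 \<in> E \<longrightarrow> b2 \<in> E \<longrightarrow>
        A \<union> {b1, b2} \<in> D \<longrightarrow> \<rho> (A \<union> {b1, b2}) > \<rho> A \<longrightarrow>
        (\<exists>j\<in>{b1, b2}. insert j A \<in> D \<and> \<rho> (insert j A) = \<rho> A + 1)"
    using assms unfolding poset_matroid_def by (elim conjE) assumption
  have a2: "finite E" "D \<subseteq> Pow E" "{} \<in> D" using a unfolding acc_dist_lattice_def by blast+
  show "acc_dist_lattice E D" by (rule a)
  show "finite E" "D \<subseteq> Pow E" "{} \<in> D" by (rule a2(1), rule a2(2), rule a2(3))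
  show "\<And>A B. A \<in> D \<Longrightarrow> B \<in> D \<Longrightarrow> A \<subseteq> B \<Longrightarrow> \<rho> A \<le> \<rho> B" using m by blast
  show "\<And>A e. A \<in> D \<Longrightarrow> insert e A \<in> D \<Longrightarrow> \<rho> (insert e A) \<le> \<rho> A + 1" using u by blast
  show "\<And>A b1 b2. A \<in> D \<Longrightarrow> b1 \<in> E \<Longrightarrow> b2 \<in> E \<Longrightarrow> A \<union> {b1, b2} \<in> D \<Longrightarrow> \<rho> (A \<union> {b1, b2}) > \<rho> A \<Longrightarrow>
        (\<exists>j\<in>{b1, b2}. insert j A \<in> D \<and> \<rho> (insert j A) = \<rho> A + 1)"
    using l by blast
qed


lemma gcp:
  assumes PM: "poset_matroid E D \<rho>" and C: "C \<in> D"
  shows "A \<in> D \<Longrightarrow> A \<subseteq> C \<Longrightarrow> \<rho> A < \<rho> C \<Longrightarrow> \<exists>f\<in>C - A. insert f A \<in> D \<and> \<rho> (insert f A) = \<rho> A + 1"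
proof (induction "card (C - A)" arbitrary: A rule: less_induct)
  case less
  have L: "acc_dist_lattice E D" using pm_facts(1)[OF PM] .
  have finC: "finite C" using C pm_facts(2,3)[OF PM] by (auto intro: finite_subset)
  have CE: "C \<subseteq> E" using C pm_facts(3)[OF PM] by auto
  have "A \<noteq> C" using less.prems by auto
  then have "A \<subset> C" using less.prems by auto
  then obtain f where f: "f \<in> C - A" "insert f A \<in> D" using step_D[OF L less.prems(1) C] by blast
  have m1: "\<rho> A \<le> \<rho> (insert f A)" using pm_facts(5)[OF PM less.prems(1) f(2)] by auto
  have m2: "\<rho> (insert f A) \<le> \<rho> A + 1" using pm_facts(6)[OF PM less.prems(1) f(2)] .
  show ?case
  proof (cases "\<rho> (insert f A) = \<rho> A + 1")
    case True
    then show ?thesis using f by blast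
  next
    case False
    then have eq: "\<rho> (insert f A) = \<rho> A" using m1 m2 by linarith
    have lt: "card (C - insert f A) < card (C - A)"
      using f finC by (metis Diff_insert card_Diff1_less finite_Diff)
    have "insert f A \<subseteq> C" using f less.prems by auto
    then obtain g where g: "g \<in> C - insert f A" "insert g (insert f A) \<in> D"
        "\<rho> (insert g (insert f A)) = \<rho> (insert f A) + 1"
      using less.hyps[OF lt f(2)] eq less.prems by auto
    have AU: "A \<union> {f, g} = insert g (insert f A)" by auto
    have "\<exists>j\<in>{f, g}. insert j A \<in> D \<and> \<rho> (insert j A) = \<rho> A + 1"
      using pm_facts(7)[OF PM less.prems(1), of f g] f g CE AU eq by auto
    then show ?thesis using eq g by auto
  qed
qed


lemma basis_lemma:
  assumes PM: "poset_matroid E D \<rho>"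
  shows "distinct rs \<Longrightarrow> \<forall>k. set (drop k rs) \<in> D \<Longrightarrow>
    {e \<in> set rs. gv \<rho> rs e \<noteq> 0} \<in> D \<and> \<rho> {e \<in> set rs. gv \<rho> rs e \<noteq> 0} = \<rho> (set rs)"
proof (induction rs)
  case Nil
  then show ?case using pm_facts(4)[OF PM] by simp
next
  case (Cons r rs)
  let ?R = "set rs"
  let ?B = "{e \<in> set rs. gv \<rho> rs e \<noteq> 0}"
  have chR: "\<forall>k. set (drop k rs) \<in> D" using Cons.prems(2) by (metis drop_Suc_Cons)
  have dR: "distinct rs" using Cons.prems(1) by simp
  have IH: "?B \<in> D \<and> \<rho> ?B = \<rho> ?R" using Cons.IH[OF dR chR] .
  have rR: "r \<notin> ?R" using Cons.prems by simp
  have RD: "?R \<in> D" using chR[rule_format, of 0] by simp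
  have iRD: "insert r ?R \<in> D" using Cons.prems(2)[rule_format, of 0] by simp
  have m1: "\<rho> ?R \<le> \<rho> (insert r ?R)" using pm_facts(5)[OF PM RD iRD] by auto
  have m2: "\<rho> (insert r ?R) \<le> \<rho> ?R + 1" using pm_facts(6)[OF PM RD iRD] .
  have Beq: "{e \<in> set (r # rs). gv \<rho> (r # rs) e \<noteq> 0} =
     (if \<rho> (insert r ?R) = \<rho> ?R then ?B else insert r ?B)"
    using rR m1 m2 by auto
  show ?case
  proof (cases "\<rho> (insert r ?R) = \<rho> ?R")
    case True
    then show ?thesis using Beq IH by simp
  next
    case False
    then have up: "\<rho> (insert r ?R) = \<rho> ?R + 1" using m1 m2 by linarith
    have BR: "?B \<subseteq> insert r ?R" by auto
    obtain f where f: "f \<in> insert r ?R - ?B" "insert f ?B \<in> D" "\<rho> (insert f ?B) = \<rho> ?B + 1"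
      using gcp[OF PM iRD _ BR] IH up by auto
    have "f = r"
    proof (rule ccontr)
      assume "f \<noteq> r"
      then have "insert f ?B \<subseteq> ?R" using f by auto
      then have "\<rho> (insert f ?B) \<le> \<rho> ?R" using pm_facts(5)[OF PM f(2) RD] by auto
      then show False using f IH by simp
    qed
    then show ?thesis using Beq False f IH up by simp
  qed
qed



lemma lcp_helper:
  assumes U: "u_matroid E D \<rho>" and BD: "\<forall>B. is_basis E D \<rho> B \<longrightarrow> B \<in> D"
    and A: "A \<in> D" and b1A: "b1 \<notin> A" and b2A: "b2 \<notin> A" and b12: "b1 \<noteq> b2"
    and i1: "insert b1 A \<in> D" and A12: "A \<union> {b1, b2} \<in> D" and lt: "\<rho> A < \<rho> (A \<union> {b1, b2})"
  shows "\<exists>j\<in>{b1, b2}. insert j A \<in> D \<and> \<rho> (insert j A) = \<rho> A + 1"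
proof -
  have L: "acc_dist_lattice E D" using um_facts(1)[OF U] .
  have finE: "finite E" and DP: "D \<subseteq> Pow E" using um_facts(3,4)[OF U] by auto
  have m1: "\<rho> A \<le> \<rho> (insert b1 A)" using um_facts(9)[OF U A i1] by auto
  have m2: "\<rho> (insert b1 A) \<le> \<rho> A + 1" using um_facts(11)[OF U A i1] .
  show ?thesis
  proof (cases "\<rho> (insert b1 A) = \<rho> A + 1")
    case True then show ?thesis using i1 by blast
  next
    case False
    then have eq1: "\<rho> (insert b1 A) = \<rho> A" using m1 m2 by linarith
    have AU: "A \<union> {b1, b2} = insert b2 (insert b1 A)" by auto
    have "\<rho> (A \<union> {b1, b2}) \<le> \<rho> (insert b1 A) + 1"
      using um_facts(11)[OF U i1] A12 unfolding AU by blast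
    then have eq12: "\<rho> (A \<union> {b1, b2}) = \<rho> A + 1" using lt eq1 by linarith
    have fin12: "finite (A \<union> {b1, b2})" using A12 DP finE by (auto intro: finite_subset)
    have EE: "E \<in> D" using um_facts(6)[OF U] .
    have Esub: "A \<union> {b1, b2} \<subseteq> E" using A12 DP by auto
    obtain l0 where l0: "chainF D {} l0" "{} \<union> set l0 = A"
      using chain_exists[of A "{}" D] um_facts(5)[OF U] A DP finE step_D[OF L]
      by (metis Pow_iff empty_subsetI finite_subset psubset_imp_subset subsetD)
    obtain l3 where l3: "chainF D (A \<union> {b1, b2}) l3" "(A \<union> {b1, b2}) \<union> set l3 = E"
      using chain_exists[of E "A \<union> {b1, b2}" D] Esub A12 EE finE step_D[OF L] by blast
    have cm: "chainF D A [b2, b1]"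
      unfolding chainF_def
    proof (intro conjI allI)
      show "distinct [b2, b1]" using b12 by simp
      show "A \<inter> set [b2, b1] = {}" using b1A b2A by simp
      fix k show "A \<union> set (drop k [b2, b1]) \<in> D"
      proof (cases k)
        case 0 then show ?thesis using A12 by (simp add: insert_commute)
      next
        case (Suc n) then show ?thesis using i1 A by (cases n) auto
      qed
    qed
    have c1: "chainF D {} ([b2, b1] @ l0)"
      using chain_append[of D "{}" l0 "[b2, b1]"] l0 cm by simp
    have s1: "{} \<union> set ([b2, b1] @ l0) = A \<union> {b1, b2}" using l0 by auto
    have c2: "chainF D {} (l3 @ [b2, b1] @ l0)"
      using chain_append[OF c1, of l3] l3 s1 by simp
    define rs where "rs = l3 @ [b2, b1] @ l0"
    have d: "distinct rs" and ch: "\<forall>k. set (drop k rs) \<in> D"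
      using c2 unfolding rs_def chainF_def by auto
    have sE: "set rs = E" using l3 s1 unfolding rs_def by auto
    have vx: "is_vertex (base_polyhedron E D \<rho>) (gv \<rho> rs)" using gv_vertex[OF U d ch sE] .
    define B where "B = supp E (gv \<rho> rs)"
    have BinD: "B \<in> D" using BD vx unfolding is_basis_def B_def by blast
    have nl3: "b1 \<notin> set l3" "b2 \<notin> set l3" using l3(1) unfolding chainF_def by auto
    have sl0: "set l0 = A" using l0 by simp
    have gb2: "gv \<rho> rs b2 = real (\<rho> (A \<union> {b1, b2})) - real (\<rho> (insert b1 A))"
      unfolding rs_def using gv_app[OF nl3(2)] AU sl0 by simp
    have gb1: "gv \<rho> rs b1 = real (\<rho> (insert b1 A)) - real (\<rho> A)"
      unfolding rs_def using gv_app[OF nl3(1)] b12 sl0 by simp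
    have b2B: "b2 \<in> B" using gb2 eq1 eq12 Esub unfolding B_def supp_def by auto
    have b1B: "b1 \<notin> B" using gb1 eq1 unfolding B_def supp_def by auto
    have "B \<inter> (A \<union> {b1, b2}) \<in> D" using um_facts(8)[OF U BinD A12] .
    then have "A \<union> (B \<inter> (A \<union> {b1, b2})) \<in> D" using um_facts(7)[OF U A] by blast
    moreover have "A \<union> (B \<inter> (A \<union> {b1, b2})) = insert b2 A" using b2B b1B by auto
    ultimately have i2: "insert b2 A \<in> D" by simp
    have sm: "\<rho> (insert b1 A \<union> insert b2 A) + \<rho> (insert b1 A \<inter> insert b2 A) \<le> \<rho> (insert b1 A) + \<rho> (insert b2 A)"
      using um_facts(10)[OF U i1 i2] .
    have "insert b1 A \<union> insert b2 A = A \<union> {b1, b2}" by auto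
    moreover have "insert b1 A \<inter> insert b2 A = A" using b12 b1A b2A by auto
    ultimately have "\<rho> A + 1 \<le> \<rho> (insert b2 A)" using sm eq1 eq12 by simp
    moreover have "\<rho> (insert b2 A) \<le> \<rho> A + 1" using um_facts(11)[OF U A i2] .
    ultimately show ?thesis using i2 by auto
  qed
qed

theorem theorem7p2:
  fixes E :: "'a set" and D :: "'a set set" and \<rho> :: "'a set \<Rightarrow> nat"
  assumes "u_matroid E D \<rho>"
  shows "poset_matroid E D \<rho> \<longleftrightarrow> (\<forall>B. is_basis E D \<rho> B \<longrightarrow> B \<in> D)"
proof
  note U = assms
  assume PM: "poset_matroid E D \<rho>"
  show "\<forall>B. is_basis E D \<rho> B \<longrightarrow> B \<in> D"
  proof (intro allI impI)
    fix B assume "is_basis E D \<rho> B"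
    then obtain x where vx: "is_vertex (base_polyhedron E D \<rho>) x" and B: "B = supp E x"
      unfolding is_basis_def by blast
    have xP: "x \<in> base_polyhedron E D \<rho>" using vx unfolding is_vertex_def by blast
    define T where "T = {S \<in> D. sum x S = real (\<rho> S)}"
    have r0: "\<rho> {} = 0" using um_facts(2)[OF U] .
    have eT: "{} \<in> T" unfolding T_def using um_facts(5)[OF U] r0 by simp
    have ET: "E \<in> T" unfolding T_def using um_facts(6)[OF U] xP unfolding base_polyhedron_def by simp
    obtain ls where ls: "chainF T {} ls" "{} \<union> set ls = E"
      using chain_exists[of E "{}" T] um_facts(3)[OF U] eT ET tight_step[OF U vx T_def _ ET] by blast
    have d: "distinct ls" and chT: "\<forall>k. set (drop k ls) \<in> T" using ls(1) unfolding chainF_def by auto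
    have sE: "set ls = E" using ls by simp
    have chD: "\<forall>k. set (drop k ls) \<in> D" using chT unfolding T_def by auto
    have "\<forall>k. sum x (set (drop k ls)) = real (\<rho> (set (drop k ls))) - real (\<rho> {})"
      using chT r0 unfolding T_def by auto
    then have xg: "\<forall>e\<in>set ls. x e = gv \<rho> ls e" using gv_determined[OF d] by blast
    have "B = {e \<in> set ls. gv \<rho> ls e \<noteq> 0}" using B xg sE unfolding supp_def by auto
    then show "B \<in> D" using basis_lemma[OF PM d chD] by simp
  qed
next
  note U = assms
  assume BD: "\<forall>B. is_basis E D \<rho> B \<longrightarrow> B \<in> D"
  have L: "acc_dist_lattice E D" using um_facts(1)[OF U] .
  have lcp: "\<exists>j\<in>{b1, b2}. insert j A \<in> D \<and> \<rho> (insert j A) = \<rho> A + 1"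
    if A: "A \<in> D" and b1: "b1 \<in> E" and b2: "b2 \<in> E" and A12: "A \<union> {b1, b2} \<in> D"
      and lt: "\<rho> (A \<union> {b1, b2}) > \<rho> A" for A b1 b2
  proof -
    have single: "\<exists>j\<in>{b1, b2}. insert j A \<in> D \<and> \<rho> (insert j A) = \<rho> A + 1"
      if "j \<in> {b1, b2}" "A \<union> {b1, b2} = insert j A" for j
    proof -
      have "insert j A \<in> D" "\<rho> A < \<rho> (insert j A)" using that A12 lt by auto
      moreover have "\<rho> (insert j A) \<le> \<rho> A + 1" using um_facts(11)[OF U A] calculation(1) .
      ultimately show ?thesis using that(1) by force
    qed
    show ?thesis
    proof (cases "b1 \<in> A \<or> b2 \<in> A \<or> b1 = b2")
      case True
      then show ?thesis
      proof (elim disjE)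
        assume "b1 \<in> A" then show ?thesis using single[of b2] by auto
      next
        assume "b2 \<in> A" then show ?thesis using single[of b1] by auto
      next
        assume "b1 = b2" then show ?thesis using single[of b1] by auto
      qed
    next
      case False
      then have nb: "b1 \<notin> A" "b2 \<notin> A" "b1 \<noteq> b2" by auto
      have "A \<subset> A \<union> {b1, b2}" using nb by auto
      then obtain y where y: "y \<in> {b1, b2}" "insert y A \<in> D"
        using step_D[OF L A A12] by auto
      show ?thesis
      proof (cases "y = b1")
        case True
        then show ?thesis using lcp_helper[OF U BD A nb(1,2,3) _ A12 lt] y by simp
      next
        case False
        then have y2: "y = b2" using y by auto
        have e: "A \<union> {b2, b1} = A \<union> {b1, b2}" by auto
        have "\<exists>j\<in>{b2, b1}. insert j A \<in> D \<and> \<rho> (insert j A) = \<rho> A + 1"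
          using lcp_helper[OF U BD A nb(2,1) _ _ _ , of ] nb(3) y y2 A12 lt e by auto
        then show ?thesis by auto
      qed
    qed
  qed
  show "poset_matroid E D \<rho>"
    unfolding poset_matroid_def
    using L um_facts(2,9,11)[OF U] lcp by blast
qed


end
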